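(* Let $U\subset M_{\mathbb R}$ be a convex open set, let $\mathbf w=(m,P,\Theta)$ be a wall in $U$ with $P$ a tropical hyperplane in $U$, and write $\mathrm{Log}(\Theta)=\sum_{j,k\ge1}a_{jk}\,z^{km}\check\partial_n\,t^j$ as in the context. Let $u_2$ be an affine function on $U$ with $P=\{u_2=0\}$ and $u_2>0$ on $H_+$, and put $$\delta_m:=\Big(\frac{1}{\hbar\pi}\Big)^{1/2}e^{-u_2^2/\hbar}\,du_2 .$$ Then the element $\Pi:=-\delta_m\cdot\mathrm{Log}(\Theta)=-\sum_{j,k\ge1}a_{jk}\,\delta_m\,z^{km}\check\partial_n\,t^j\in\widehat{\mathbf G}^1(U)$ satisfies the Maurer–Cartan equation $\bar\partial\Pi+\tfrac12[\Pi,\Pi]=0$.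
   Context: Let $M\cong\mathbb Z^n$ be a lattice, $N=\mathrm{Hom}(M,\mathbb Z)$, $(m,n)\in\mathbb Z$ the natural pairing, $M_{\mathbb R}=M\otimes\mathbb R$. Open subsets of $M_{\mathbb R}$ carry the standard affine structure with flat connection $\nabla$ and affine coordinates $x_1,\dots,x_n$. Fix a Riemannian metric $g=(g_{jk})$ (of Hessian type) on $U$ and a parameter $\hbar>0$. For $n\in N$ (coordinates $n^j$) let $\partial_n:=\frac{\hbar}{4\pi}\sum_{j,k}n^jg_{jk}\,\partial/\partial x_k$. Let $R=\mathbb C[[t]]$, $\mathbf m=tR$. Let $\Omega^k_\hbar(U)$ be the space of complex $k$-forms on $U$ depending smoothly on $\hbar\in\mathbb R_{>0}$. $\mathbf G^*(U)$ is the space of finite sums $\sum\alpha_m^n\,z^m\check\partial_n$ with $\alpha_m^n\in\Omega^*_\hbar(U)$, $m\in M$, where $z^m$ and $\check\partial_n$ are formal symbols with $\check\partial_n$ additive in $n\in N$; it is graded by form degree, with differential $\bar\partial(\alpha z^m\check\partial_n)=(d\alpha)z^m\check\partial_n$ and bracket $$[\alpha z^m\check\partial_n,\beta z^{m'}\check\partial_{n'}]=\alpha\wedge\beta\,z^{m+m'}\check\partial_{(m',n)n'-(m,n')n}+\alpha\wedge(\nabla_{\partial_n}\beta)\,z^{m+m'}\check\partial_{n'}-(-1)^{|\alpha||\beta|}\beta\wedge(\nabla_{\partial_{n'}}\alpha)\,z^{m+m'}\check\partial_n$$ (extended $R$-bilinearly). $\widehat{\mathbf G}^*(U):=\varprojlim_N\mathbf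 G^*(U)\otimes_{\mathbb C}R/\mathbf m^{N+1}$. A wall $\mathbf w=(m,P,\Theta)$: $m\in M\setminus\{0\}$; $P$ an oriented tropical hyperplane (codimension one affine hyperplane with rational slope) in $U$ parallel to $m$, dividing $U$ into two open half-spaces $H_+$, $H_-$, where $H_+$ is the side into which the normal $\nu_P$ points, $\nu_P$ chosen so that $TP\oplus\mathbb R\nu_P$ has the orientation of $U$; $n\in N$ the unique primitive element vanishing on $TP$ with $(\nu_P,n)<0$; and $\mathrm{Log}(\Theta)=\sum_{j,k\ge1}a_{jk}z^{km}\check\partial_nt^j$ with $a_{jk}\in\mathbb C$ and, for each $j$, $a_{jk}\neq0$ for only finitely many $k$. *)

theory Defs
  imports "HOL-Analysis.Analysis" "HOL-Combinatorics.Permutations"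
begin

text \<open>M = int^'n, N = Hom(M,Z) = int^'n via the dual basis; M_R = real^'n with affine
  coordinates x_i = x $ i.\<close>

definition lpair :: "int^('n::finite) \<Rightarrow> int^'n \<Rightarrow> int" where
  "lpair m n = (\<Sum>i\<in>UNIV. m $ i * n $ i)"

definition rpair :: "real^('n::finite) \<Rightarrow> int^'n \<Rightarrow> real" where
  "rpair v n = (\<Sum>i\<in>UNIV. v $ i * real_of_int (n $ i))"

definition primitive :: "int^('n::finite) \<Rightarrow> bool" where
  "primitive n \<longleftrightarrow> n \<noteq> 0 \<and> (\<forall>(k::int) n'. n = k *s n' \<longrightarrow> k = 1 \<or> k = -1)"

definition pd :: "('n::finite) \<Rightarrow> (real^'n \<Rightarrow> 'a::real_normed_vector) \<Rightarrow> real^'n \<Rightarrow> 'a" where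
  "pd k f x = vector_derivative (\<lambda>s. f (x + s *\<^sub>R axis k 1)) (at 0)"

text \<open>Iterated partial derivatives of a function of (hbar, x); None = d/d hbar.\<close>
fun iter_pd :: "('n::finite) option list \<Rightarrow> (real \<Rightarrow> real^'n \<Rightarrow> complex) \<Rightarrow> real \<Rightarrow> real^'n \<Rightarrow> complex" where
  "iter_pd [] f = f"
| "iter_pd (None # ds) f = (\<lambda>h x. vector_derivative (\<lambda>s. iter_pd ds f s x) (at h))"
| "iter_pd (Some k # ds) f = (\<lambda>h x. pd k (\<lambda>y. iter_pd ds f h y) x)"

definition smooth_HU :: "(real^('n::finite)) set \<Rightarrow> (real \<Rightarrow> real^'n \<Rightarrow> complex) \<Rightarrow> bool" where
  "smooth_HU U f \<longleftrightarrow>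
     (\<forall>ds. continuous_on ({0<..} \<times> U) (\<lambda>(h, x). iter_pd ds f h x) \<and>
        (\<forall>h x. 0 < h \<and> x \<in> U \<longrightarrow>
           (\<lambda>s. iter_pd ds f s x) differentiable (at h) \<and>
           (\<forall>k. (\<lambda>s. iter_pd ds f h (x + s *\<^sub>R axis k 1)) differentiable (at 0))))"

definition hessian_metric :: "(real^('n::finite)) set \<Rightarrow> (real^'n \<Rightarrow> real^'n^'n) \<Rightarrow> bool" where
  "hessian_metric U g \<longleftrightarrow>
     (\<forall>j k. smooth_HU U (\<lambda>h x. complex_of_real (g x $ j $ k))) \<and>
     (\<forall>x\<in>U. \<forall>j k. g x $ j $ k = g x $ k $ j) \<and>
     (\<forall>x\<in>U. \<forall>v. v \<noteq> 0 \<longrightarrow> (\<Sum>j\<in>UNIV. \<Sum>k\<in>UNIV. v $ j * g x $ j $ k * v $ k) > 0) \<and>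
     (\<forall>x\<in>U. \<exists>V \<phi>. open V \<and> x \<in> V \<and> smooth_HU (V \<inter> U) (\<lambda>h y. complex_of_real (\<phi> y)) \<and>
        (\<forall>y\<in>V \<inter> U. \<forall>j k. g y $ j $ k = pd j (pd k \<phi>) y))"

text \<open>A (mixed degree) complex form on U depending on hbar: alpha hbar x [i1,...,ik] is the value
  of the degree-k part on the basis vectors (e_i1,...,e_ik) (so alpha = sum over ordered index
  tuples of (1/k!) alpha(i1..ik) dx_i1 ^ ... ^ dx_ik).\<close>
type_synonym ('n) form = "real \<Rightarrow> real^('n::finite) \<Rightarrow> 'n list \<Rightarrow> complex"

definition zform :: "('n::finite) form" where "zform = (\<lambda>h x is. 0)"

definition zero_form :: "(real \<Rightarrow> real^('n::finite) \<Rightarrow> complex) \<Rightarrow> 'n form" where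
  "zero_form f = (\<lambda>h x is. if is = [] then f h x else 0)"

definition deg_part :: "nat \<Rightarrow> ('n::finite) form \<Rightarrow> 'n form" where
  "deg_part k \<alpha> = (\<lambda>h x is. if length is = k then \<alpha> h x is else 0)"

definition wedge :: "('n::finite) form \<Rightarrow> 'n form \<Rightarrow> 'n form" where
  "wedge \<alpha> \<beta> = (\<lambda>h x is.
     \<Sum>k\<le>length is. \<Sum>\<sigma>\<in>{\<sigma>. \<sigma> permutes {..<length is}}.
       of_int (sign \<sigma>) / (fact k * fact (length is - k)) *
       \<alpha> h x (map (\<lambda>p. is ! \<sigma> p) [0..<k]) * \<beta> h x (map (\<lambda>p. is ! \<sigma> p) [k..<length is]))"

definition ext_d :: "('n::finite) form \<Rightarrow> 'n form" where
  "ext_d \<alpha> = (\<lambda>h x is. \<Sum>j<length is.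
     (-1) ^ j * pd (is ! j) (\<lambda>y. \<alpha> h y (take j is @ drop (Suc j) is)) x)"

definition nabla :: "(real \<Rightarrow> real^('n::finite) \<Rightarrow> real^'n) \<Rightarrow> 'n form \<Rightarrow> 'n form" where
  "nabla v \<beta> = (\<lambda>h x is. \<Sum>k\<in>UNIV. complex_of_real (v h x $ k) * pd k (\<lambda>y. \<beta> h y is) x)"

definition dvec :: "(real^('n::finite) \<Rightarrow> real^'n^'n) \<Rightarrow> int^'n \<Rightarrow> real \<Rightarrow> real^'n \<Rightarrow> real^'n" where
  "dvec g n = (\<lambda>h x. \<chi> k. h / (4 * pi) * (\<Sum>j\<in>UNIV. real_of_int (n $ j) * g x $ j $ k))"

definition alternating :: "('n::finite) form \<Rightarrow> bool" where
  "alternating \<alpha> \<longleftrightarrow> (\<forall>h x is \<sigma>. \<sigma> permutes {..<length is} \<longrightarrow>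
      \<alpha> h x (map (\<lambda>p. is ! \<sigma> p) [0..<length is]) = of_int (sign \<sigma>) * \<alpha> h x is)"

definition is_kform :: "(real^('n::finite)) set \<Rightarrow> nat \<Rightarrow> 'n form \<Rightarrow> bool" where
  "is_kform U k \<alpha> \<longleftrightarrow> alternating \<alpha> \<and> (\<forall>h x is. length is \<noteq> k \<longrightarrow> \<alpha> h x is = 0) \<and>
     (\<forall>is. smooth_HU U (\<lambda>h x. \<alpha> h x is))"

text \<open>An element of G is stored canonically as A m c = the form coefficient of
  z^m d_{e_c} (e_c the standard basis of N); i.e. A = sum_{m,c} (A m c) z^m d_{e_c},
  using additivity of d_n in n. An element of hat G = G[[t]] is a sequence N |-> (t^N-coefficient).\<close>
type_synonym ('n) G = "int^('n::finite) \<Rightarrow> 'n \<Rightarrow> 'n form"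
type_synonym ('n) Ghat = "nat \<Rightarrow> ('n::finite) G"

definition mono :: "('n::finite) form \<Rightarrow> int^'n \<Rightarrow> int^'n \<Rightarrow> 'n G" where
  "mono \<alpha> m n = (\<lambda>m' c. if m' = m then (\<lambda>h x is. of_int (n $ c) * \<alpha> h x is) else zform)"

definition Gsupp :: "('n::finite) G \<Rightarrow> (int^'n) set" where
  "Gsupp A = {m. \<exists>c. A m c \<noteq> zform}"

text \<open>The bracket on generators alpha z^m d_n, beta z^m' d_n' with alpha of degree p, beta of degree q.\<close>
definition br_gen :: "(real^('n::finite) \<Rightarrow> real^'n^'n) \<Rightarrow> nat \<Rightarrow> nat \<Rightarrow>
    'n form \<Rightarrow> int^'n \<Rightarrow> int^'n \<Rightarrow> 'n form \<Rightarrow> int^'n \<Rightarrow> int^'n \<Rightarrow> 'n G" where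
  "br_gen g p q \<alpha> m n \<beta> m' n' = (\<lambda>M c h x is.
       mono (wedge \<alpha> \<beta>) (m + m') (lpair m' n *s n' - lpair m n' *s n) M c h x is
     + mono (wedge \<alpha> (nabla (dvec g n) \<beta>)) (m + m') n' M c h x is
     - (-1) ^ (p * q) * mono (wedge \<beta> (nabla (dvec g n') \<alpha>)) (m + m') n M c h x is)"

definition Gbr :: "(real^('n::finite) \<Rightarrow> real^'n^'n) \<Rightarrow> 'n G \<Rightarrow> 'n G \<Rightarrow> 'n G" where
  "Gbr g A B = (\<lambda>M c h x is.
     \<Sum>m\<in>Gsupp A. \<Sum>m'\<in>Gsupp B. \<Sum>a\<in>UNIV. \<Sum>b\<in>UNIV. \<Sum>p\<le>length is. \<Sum>q\<le>length is.
       br_gen g p q (deg_part p (A m a)) m (axis a 1) (deg_part q (B m' b)) m' (axis b 1) M c h x is)"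

definition Ghat_br :: "(real^('n::finite) \<Rightarrow> real^'n^'n) \<Rightarrow> 'n Ghat \<Rightarrow> 'n Ghat \<Rightarrow> 'n Ghat" where
  "Ghat_br g A B = (\<lambda>N M c h x is. \<Sum>j\<le>N. Gbr g (A j) (B (N - j)) M c h x is)"

definition Ghat_dbar :: "('n::finite) Ghat \<Rightarrow> 'n Ghat" where
  "Ghat_dbar A = (\<lambda>N M c. ext_d (A N M c))"

definition in_Ghat :: "(real^('n::finite)) set \<Rightarrow> nat \<Rightarrow> 'n Ghat \<Rightarrow> bool" where
  "in_Ghat U k A \<longleftrightarrow> (\<forall>N. finite (Gsupp (A N))) \<and> (\<forall>N M c. is_kform U k (A N M c))"

definition maurer_cartan :: "(real^('n::finite)) set \<Rightarrow> (real^'n \<Rightarrow> real^'n^'n) \<Rightarrow> 'n Ghat \<Rightarrow> bool" where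
  "maurer_cartan U g A \<longleftrightarrow> (\<forall>N M c h x is. 0 < h \<longrightarrow> x \<in> U \<longrightarrow>
      Ghat_dbar A N M c h x is + 1/2 * Ghat_br g A A N M c h x is = 0)"

definition tangent_space :: "(real^('n::finite)) set \<Rightarrow> (real^'n) set" where
  "tangent_space P = span {y - x | x y. x \<in> P \<and> y \<in> P}"

definition tropical_hyperplane :: "(real^('n::finite)) set \<Rightarrow> (real^'n) set \<Rightarrow> bool" where
  "tropical_hyperplane U P \<longleftrightarrow> P \<noteq> {} \<and>
     (\<exists>(n0::int^'n) (c::real). n0 \<noteq> 0 \<and> P = {x \<in> U. rpair x n0 = c})"

definition half_plus :: "(real^('n::finite)) set \<Rightarrow> (real^'n) set \<Rightarrow> real^'n \<Rightarrow> (real^'n) set" where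
  "half_plus U P \<nu> = {x \<in> U. \<exists>p\<in>P. \<exists>s>0. x - p - s *\<^sub>R \<nu> \<in> tangent_space P}"

text \<open>A wall (m, P, Theta) with oriented P, normal nu, normal covector n and
  Log Theta = sum_{j,k>=1} a j k z^{km} d_n t^j.\<close>
definition is_wall :: "(real^('n::finite)) set \<Rightarrow> int^'n \<Rightarrow> (real^'n) set \<Rightarrow> real^'n \<Rightarrow> int^'n \<Rightarrow>
    (nat \<Rightarrow> nat \<Rightarrow> complex) \<Rightarrow> bool" where
  "is_wall U m P \<nu> n a \<longleftrightarrow>
     m \<noteq> 0 \<and> tropical_hyperplane U P \<and>
     (\<chi> i. real_of_int (m $ i)) \<in> tangent_space P \<and>
     \<nu> \<notin> tangent_space P \<and>
     primitive n \<and> (\<forall>v\<in>tangent_space P. rpair v n = 0) \<and> rpair \<nu> n < 0 \<and>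
     (\<forall>j\<ge>1. finite {k. 1 \<le> k \<and> a j k \<noteq> 0})"

definition delta_m :: "(real^('n::finite) \<Rightarrow> real) \<Rightarrow> 'n form" where
  "delta_m u2 = wedge (zero_form (\<lambda>h x. complex_of_real (sqrt (1 / (h * pi)) * exp (- (u2 x)\<^sup>2 / h))))
                      (ext_d (zero_form (\<lambda>h x. complex_of_real (u2 x))))"

definition wall_Pi :: "(real^('n::finite) \<Rightarrow> real) \<Rightarrow> int^'n \<Rightarrow> int^'n \<Rightarrow> (nat \<Rightarrow> nat \<Rightarrow> complex) \<Rightarrow> 'n Ghat" where
  "wall_Pi u2 m n a = (\<lambda>j M c h x is.
     if j = 0 then 0 else
     - (\<Sum>k\<in>{k. 1 \<le> k \<and> a j k \<noteq> 0}. a j k * mono (delta_m u2) (int k *s m) n M c h x is))"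

end

theory Submission
  imports Defs
begin

lemma hvd_eq: "(f has_vector_derivative a) F \<Longrightarrow> a = b \<Longrightarrow> (f has_vector_derivative b) F"
  by simp

lemma hrd_eq: "(f has_real_derivative a) F \<Longrightarrow> a = b \<Longrightarrow> (f has_real_derivative b) F"
  by simp

definition Phi :: "real^('n::finite) \<Rightarrow> real \<Rightarrow> real \<Rightarrow> real^'n \<Rightarrow> complex" where
  "Phi l b h x = complex_of_real (sqrt (1 / (h * pi)) * exp (- (l \<bullet> x + b)\<^sup>2 / h))"

lemma Phi_dh:
  assumes h: "0 < h"
  shows "((\<lambda>s. Phi l b s x) has_vector_derivative
     (complex_of_real (-1/2) * (complex_of_real (1/h) * Phi l b h x) +
      complex_of_real (1/h) * (complex_of_real (1/h) * (complex_of_real (l \<bullet> x + b) * (complex_of_real (l \<bullet> x + b) * Phi l b h x))))) (at h)"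
proof -
  define w where "w = l \<bullet> x + b"
  have d1: "((\<lambda>s. sqrt (1 / (s * pi))) has_real_derivative (inverse (sqrt (1/(h*pi))) / 2 * (- pi / (h*pi)^2))) (at h)"
    using h pi_gt_zero by (auto intro!: derivative_eq_intros DERIV_real_sqrt simp: power2_eq_square mult_less_0_iff)
  have d2: "((\<lambda>s. exp (- w\<^sup>2 / s)) has_real_derivative (exp (- w\<^sup>2 / h) * (w\<^sup>2 / h^2))) (at h)"
    using h by (auto intro!: derivative_eq_intros simp: power2_eq_square field_simps)
  have d: "((\<lambda>s. sqrt (1 / (s * pi)) * exp (- w\<^sup>2 / s)) has_real_derivative
      (sqrt (1 / (h * pi)) * (exp (- w\<^sup>2 / h) * (w\<^sup>2 / h^2)) + inverse (sqrt (1/(h*pi))) / 2 * (- pi / (h*pi)^2) * exp (- w\<^sup>2 / h))) (at h)"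
    by (rule hrd_eq[OF DERIV_mult[OF d1 d2]]) (simp add: algebra_simps)
  have e: "sqrt (1 / (h * pi)) * (exp (- w\<^sup>2 / h) * (w\<^sup>2 / h^2)) + inverse (sqrt (1/(h*pi))) / 2 * (- pi / (h*pi)^2) * exp (- w\<^sup>2 / h)
     = (-1/2) * ((1/h) * (sqrt (1 / (h * pi)) * exp (- w\<^sup>2 / h))) + (1/h) * ((1/h) * (w * (w * (sqrt (1 / (h * pi)) * exp (- w\<^sup>2 / h)))))"
  proof -
    have s: "inverse (sqrt (1/(h*pi))) = sqrt (h*pi)" using h by (simp add: real_sqrt_divide)
    have s2: "sqrt (h*pi) * pi / (h*pi)^2 = sqrt (1/(h*pi)) / h"
    proof -
      define q where "q = sqrt (h*pi)"
      have qp: "q > 0" using h by (simp add: q_def)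
      have hq: "h*pi = q*q" using h by (simp add: q_def)
      have i: "sqrt (1/(h*pi)) = 1 / q" by (simp add: real_sqrt_divide q_def)
      have r: "q * pi / (q*q)^2 = (1/q) / h"
      proof -
        have "q * pi * h * q = (q*q)^2" using hq by (simp add: power2_eq_square algebra_simps)
        thus ?thesis using qp h by (simp add: field_simps)
      qed
      show ?thesis unfolding q_def[symmetric] i unfolding hq by (rule r)
    qed
    show ?thesis using h s s2 by (simp add: field_simps power2_eq_square)
  qed
  show ?thesis
    unfolding Phi_def w_def[symmetric]
    apply (rule hvd_eq[OF has_vector_derivative_of_real[OF d[unfolded e]]])
    by simp
qed

lemma Phi_dx:
  assumes h: "0 < h"
  shows "((\<lambda>s. Phi l b h (x + s *\<^sub>R axis k 1)) has_vector_derivative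
     (complex_of_real (-2 * l $ k) * (complex_of_real (1/h) * (complex_of_real (l \<bullet> x + b) * Phi l b h x)))) (at 0)"
proof -
  define w where "w = l \<bullet> x + b"
  have eq: "\<And>s. l \<bullet> (x + s *\<^sub>R axis k 1) + b = w + s * l $ k"
    by (simp add: w_def inner_add_right inner_axis algebra_simps)
  have d: "((\<lambda>s. sqrt (1 / (h * pi)) * exp (- (w + s * l $ k)\<^sup>2 / h)) has_real_derivative
      (sqrt (1 / (h * pi)) * (exp (- (w + 0 * l $ k)\<^sup>2 / h) * (- (2 * (w + 0 * l $ k) * l $ k) / h)))) (at 0)"
    using h by (auto intro!: derivative_eq_intros simp: power2_eq_square field_simps)
  have v: "complex_of_real (sqrt (1 / (h * pi)) * (exp (- (w + 0 * l $ k)\<^sup>2 / h) * (- (2 * (w + 0 * l $ k) * l $ k) / h)))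
     = complex_of_real (-2 * l $ k) * (complex_of_real (1/h) * (complex_of_real w * complex_of_real (sqrt (1 / (h * pi)) * exp (- w\<^sup>2 / h))))"
    by (simp add: algebra_simps)
  show ?thesis
    unfolding Phi_def eq w_def[symmetric]
    using hvd_eq[OF has_vector_derivative_of_real[OF d] v] by simp
qed

inductive nice :: "real^('n::finite) \<Rightarrow> real \<Rightarrow> (real \<Rightarrow> real^'n \<Rightarrow> complex) \<Rightarrow> bool" for l b where
  base: "nice l b (Phi l b)"
| cmul: "nice l b f \<Longrightarrow> nice l b (\<lambda>h x. c * f h x)"
| add: "nice l b f \<Longrightarrow> nice l b g \<Longrightarrow> nice l b (\<lambda>h x. f h x + g h x)"
| invh: "nice l b f \<Longrightarrow> nice l b (\<lambda>h x. complex_of_real (1/h) * f h x)"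
| mulw: "nice l b f \<Longrightarrow> nice l b (\<lambda>h x. complex_of_real (l \<bullet> x + b) * f h x)"

lemma nice_dh:
  assumes "nice l b f"
  shows "\<exists>f'. nice l b f' \<and> (\<forall>h>0. \<forall>x. ((\<lambda>s. f s x) has_vector_derivative f' h x) (at h))"
  using assms
proof induction
  case base
  show ?case
    apply (rule exI[of _ "\<lambda>h x. complex_of_real (-1/2) * (complex_of_real (1/h) * Phi l b h x) +
      complex_of_real (1/h) * (complex_of_real (1/h) * (complex_of_real (l \<bullet> x + b) * (complex_of_real (l \<bullet> x + b) * Phi l b h x)))"])
    apply (intro conjI allI impI)
     apply (intro nice.intros)
    by (rule Phi_dh)
next
  case (cmul f c)
  then obtain f' where f': "nice l b f'" "\<forall>h>0. \<forall>x. ((\<lambda>s. f s x) has_vector_derivative f' h x) (at h)" by blast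
  show ?case
    apply (rule exI[of _ "\<lambda>h x. c * f' h x"])
    using f' by (auto intro!: nice.intros derivative_intros)
next
  case (add f g)
  then obtain f' g' where f': "nice l b f'" "\<forall>h>0. \<forall>x. ((\<lambda>s. f s x) has_vector_derivative f' h x) (at h)"
    and g': "nice l b g'" "\<forall>h>0. \<forall>x. ((\<lambda>s. g s x) has_vector_derivative g' h x) (at h)" by blast
  show ?case
    apply (rule exI[of _ "\<lambda>h x. f' h x + g' h x"])
    using f' g' by (auto intro!: nice.intros derivative_intros)
next
  case (invh f)
  then obtain f' where f': "nice l b f'" "\<forall>h>0. \<forall>x. ((\<lambda>s. f s x) has_vector_derivative f' h x) (at h)" by blast
  show ?case
  proof (rule exI[of _ "\<lambda>h x. complex_of_real (1/h) * f' h x + complex_of_real (-1) * (complex_of_real (1/h) * (complex_of_real (1/h) * f h x))"], intro conjI allI impI)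
    show "nice l b (\<lambda>h x. complex_of_real (1/h) * f' h x + complex_of_real (-1) * (complex_of_real (1/h) * (complex_of_real (1/h) * f h x)))"
      by (rule nice.add[OF nice.invh[OF f'(1)] nice.cmul[OF nice.invh[OF nice.invh[OF \<open>nice l b f\<close>]]]])
    fix h :: real and x assume h: "0 < h"
    have d1: "((\<lambda>s. 1 / s) has_real_derivative (- 1 / h^2)) (at h)"
      using h by (auto intro!: derivative_eq_intros simp: power2_eq_square)
    show "((\<lambda>s. complex_of_real (1 / s) * f s x) has_vector_derivative
       complex_of_real (1/h) * f' h x + complex_of_real (-1) * (complex_of_real (1/h) * (complex_of_real (1/h) * f h x))) (at h)"
      apply (rule hvd_eq[OF has_vector_derivative_mult[OF has_vector_derivative_of_real[OF d1]]])
       apply (rule f'(2)[rule_format, OF h])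
      by (simp add: power2_eq_square)
  qed
next
  case (mulw f)
  then obtain f' where f': "nice l b f'" "\<forall>h>0. \<forall>x. ((\<lambda>s. f s x) has_vector_derivative f' h x) (at h)" by blast
  show ?case
    apply (rule exI[of _ "\<lambda>h x. complex_of_real (l \<bullet> x + b) * f' h x"])
    apply (intro conjI)
     apply (rule nice.mulw[OF f'(1)])
    using f' by (auto intro!: derivative_intros)
qed

lemma nice_dx:
  assumes "nice l b f"
  shows "\<exists>f'. nice l b f' \<and> (\<forall>h>0. \<forall>x. ((\<lambda>s. f h (x + s *\<^sub>R axis k 1)) has_vector_derivative f' h x) (at 0))"
  using assms
proof induction
  case base
  show ?case
    apply (rule exI[of _ "\<lambda>h x. complex_of_real (-2 * l $ k) * (complex_of_real (1/h) * (complex_of_real (l \<bullet> x + b) * Phi l b h x))"])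
    apply (intro conjI allI impI)
     apply (intro nice.intros)
    by (rule Phi_dx)
next
  case (cmul f c)
  then obtain f' where f': "nice l b f'" "\<forall>h>0. \<forall>x. ((\<lambda>s. f h (x + s *\<^sub>R axis k 1)) has_vector_derivative f' h x) (at 0)" by blast
  show ?case
    apply (rule exI[of _ "\<lambda>h x. c * f' h x"])
    using f' by (auto intro!: nice.intros derivative_intros)
next
  case (add f g)
  then obtain f' g' where f': "nice l b f'" "\<forall>h>0. \<forall>x. ((\<lambda>s. f h (x + s *\<^sub>R axis k 1)) has_vector_derivative f' h x) (at 0)"
    and g': "nice l b g'" "\<forall>h>0. \<forall>x. ((\<lambda>s. g h (x + s *\<^sub>R axis k 1)) has_vector_derivative g' h x) (at 0)" by blast
  show ?case
    apply (rule exI[of _ "\<lambda>h x. f' h x + g' h x"])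
    using f' g' by (auto intro!: nice.intros derivative_intros)
next
  case (invh f)
  then obtain f' where f': "nice l b f'" "\<forall>h>0. \<forall>x. ((\<lambda>s. f h (x + s *\<^sub>R axis k 1)) has_vector_derivative f' h x) (at 0)" by blast
  show ?case
    apply (rule exI[of _ "\<lambda>h x. complex_of_real (1/h) * f' h x"])
    apply (intro conjI)
     apply (rule nice.invh[OF f'(1)])
    using f' by (auto intro!: derivative_intros)
next
  case (mulw f)
  then obtain f' where f': "nice l b f'" "\<forall>h>0. \<forall>x. ((\<lambda>s. f h (x + s *\<^sub>R axis k 1)) has_vector_derivative f' h x) (at 0)" by blast
  show ?case
  proof (rule exI[of _ "\<lambda>h x. complex_of_real (l \<bullet> x + b) * f' h x + complex_of_real (l $ k) * f h x"], intro conjI allI impI)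
    show "nice l b (\<lambda>h x. complex_of_real (l \<bullet> x + b) * f' h x + complex_of_real (l $ k) * f h x)"
      by (rule nice.add[OF nice.mulw[OF f'(1)] nice.cmul[OF \<open>nice l b f\<close>]])
    fix h :: real and x assume h: "0 < h"
    have eq: "\<And>s. l \<bullet> (x + s *\<^sub>R axis k 1) + b = (l \<bullet> x + b) + s * l $ k"
      by (simp add: inner_add_right inner_axis algebra_simps)
    have d1: "((\<lambda>s. l \<bullet> (x + s *\<^sub>R axis k 1) + b) has_real_derivative (l $ k)) (at 0)"
      unfolding eq by (auto intro!: derivative_eq_intros)
    show "((\<lambda>s. complex_of_real (l \<bullet> (x + s *\<^sub>R axis k 1) + b) * f h (x + s *\<^sub>R axis k 1)) has_vector_derivative
       complex_of_real (l \<bullet> x + b) * f' h x + complex_of_real (l $ k) * f h x) (at 0)"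
      apply (rule hvd_eq[OF has_vector_derivative_mult[OF has_vector_derivative_of_real[OF d1]]])
       apply (rule f'(2)[rule_format, OF h])
      by simp
  qed
qed

lemma nice_cont:
  assumes "nice l b f"
  shows "continuous_on ({0<..} \<times> UNIV) (\<lambda>p. f (fst p) (snd p))"
  using assms
proof induction
  case base
  show ?case unfolding Phi_def
    by (auto intro!: continuous_intros)
next
  case (cmul f c)
  then show ?case by (auto intro!: continuous_intros)
next
  case (add f g)
  then show ?case by (auto intro!: continuous_intros)
next
  case (invh f)
  then show ?case by (auto intro!: continuous_intros)
next
  case (mulw f)
  then show ?case by (auto intro!: continuous_intros)
qed

lemma ev_line:
  fixes x :: "real^('n::finite)"
  assumes "open U" "x \<in> U"
  shows "eventually (\<lambda>s. x + s *\<^sub>R axis k 1 \<in> U) (nhds (0::real))"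
proof -
  obtain e where e: "e > 0" "ball x e \<subseteq> U" using assms open_contains_ball by blast
  show ?thesis unfolding eventually_nhds_metric
  proof (intro exI[of _ e] conjI allI impI)
    fix s :: real assume "dist s 0 < e"
    hence "dist x (x + s *\<^sub>R axis k 1) < e" by (simp add: dist_norm)
    thus "x + s *\<^sub>R axis k 1 \<in> U" using e by auto
  qed (rule e(1))
qed

lemma pd_local:
  assumes "open U" "x \<in> U" "\<forall>y\<in>U. f y = g y"
  shows "pd k f x = pd k g x"
  unfolding pd_def
  apply (rule vector_derivative_cong_eq)
  using ev_line[OF assms(1,2), of k] assms(3) by (auto elim: eventually_mono)

lemma iter_local:
  assumes "open U" "\<forall>h. \<forall>x\<in>U. f h x = G h x" "x \<in> U"
  shows "iter_pd ds f h x = iter_pd ds G h x"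
  using assms(3)
proof (induction ds arbitrary: h x)
  case Nil
  then show ?case using assms(2) by simp
next
  case (Cons d ds)
  show ?case
  proof (cases d)
    case None
    have "(\<lambda>s. iter_pd ds f s x) = (\<lambda>s. iter_pd ds G s x)" using Cons by auto
    then show ?thesis using None by simp
  next
    case (Some k)
    have "\<forall>y\<in>U. iter_pd ds f h y = iter_pd ds G h y" using Cons.IH by blast
    then show ?thesis using Some pd_local[OF assms(1) Cons.prems, of "iter_pd ds f h" "iter_pd ds G h" k] by simp
  qed
qed

lemma nice_iter:
  assumes "nice l b G"
  shows "\<exists>G'. nice l b G' \<and> (\<forall>h>0. \<forall>x. iter_pd ds G h x = G' h x)"
proof (induction ds)
  case Nil
  then show ?case using assms by auto
next
  case (Cons d ds)
  then obtain G' where G': "nice l b G'" "\<forall>h>0. \<forall>x. iter_pd ds G h x = G' h x" by blast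
  show ?case
  proof (cases d)
    case None
    obtain G'' where G'': "nice l b G''" "\<forall>h>0. \<forall>x. ((\<lambda>s. G' s x) has_vector_derivative G'' h x) (at h)"
      using nice_dh[OF G'(1)] by blast
    show ?thesis
    proof (intro exI[of _ G''] conjI allI impI)
      fix h :: real and x assume h: "0 < h"
      have ev: "eventually (\<lambda>s. s \<in> UNIV \<longrightarrow> iter_pd ds G s x = G' s x) (nhds h)"
        using eventually_nhds_in_open[of "{0<..}" h] h G'(2) by (auto elim: eventually_mono)
      have "vector_derivative (\<lambda>s. iter_pd ds G s x) (at h) = vector_derivative (\<lambda>s. G' s x) (at h)"
        by (rule vector_derivative_cong_eq[OF ev]) auto
      also have "\<dots> = G'' h x" using G''(2) h by (simp add: vector_derivative_at)
      finally show "iter_pd (d # ds) G h x = G'' h x" using None by simp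
    qed (rule G''(1))
  next
    case (Some k)
    obtain G'' where G'': "nice l b G''" "\<forall>h>0. \<forall>x. ((\<lambda>s. G' h (x + s *\<^sub>R axis k 1)) has_vector_derivative G'' h x) (at 0)"
      using nice_dx[OF G'(1), of k] by blast
    show ?thesis
    proof (intro exI[of _ G''] conjI allI impI)
      fix h :: real and x assume h: "0 < h"
      have "iter_pd (d # ds) G h x = vector_derivative (\<lambda>s. G' h (x + s *\<^sub>R axis k 1)) (at 0)"
        using Some G'(2) h by (simp add: pd_def)
      also have "\<dots> = G'' h x" using G''(2) h by (simp add: vector_derivative_at)
      finally show "iter_pd (d # ds) G h x = G'' h x" .
    qed (rule G''(1))
  qed
qed

lemma smooth_from_nice:
  assumes U: "open U" and G: "nice l b G" and fG: "\<forall>h. \<forall>x\<in>U. f h x = G h x"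
  shows "smooth_HU U f"
  unfolding smooth_HU_def
proof (intro allI conjI impI)
  fix ds :: "'a option list"
  obtain G' where G': "nice l b G'" "\<forall>h>0. \<forall>x. iter_pd ds G h x = G' h x"
    using nice_iter[OF G] by blast
  have eq: "\<And>h x. 0 < h \<Longrightarrow> x \<in> U \<Longrightarrow> iter_pd ds f h x = G' h x"
    using iter_local[OF U fG] G'(2) by simp
  have "continuous_on ({0<..} \<times> U) (\<lambda>p. G' (fst p) (snd p))"
    by (rule continuous_on_subset[OF nice_cont[OF G'(1)]]) auto
  then show "continuous_on ({0<..} \<times> U) (\<lambda>(h, x). iter_pd ds f h x)"
    by (rule continuous_on_cong[THEN iffD1, rotated 2]) (auto simp: eq)
  fix h :: real and x k
  assume hx: "0 < h \<and> x \<in> U"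
  obtain Gh where Gh: "nice l b Gh" "\<forall>h>0. \<forall>x. ((\<lambda>s. G' s x) has_vector_derivative Gh h x) (at h)"
    using nice_dh[OF G'(1)] by blast
  have ev: "eventually (\<lambda>s. s \<in> UNIV \<longrightarrow> G' s x = iter_pd ds f s x) (nhds h)"
    using eventually_nhds_in_open[of "{0<..}" h] hx eq by (auto elim: eventually_mono)
  have "((\<lambda>s. iter_pd ds f s x) has_vector_derivative Gh h x) (at h)"
    using has_vector_derivative_cong_ev[OF ev] Gh(2) hx eq by auto
  then show "(\<lambda>s. iter_pd ds f s x) differentiable at h" by (rule differentiableI_vector)
  obtain Gk where Gk: "nice l b Gk" "\<forall>h>0. \<forall>x. ((\<lambda>s. G' h (x + s *\<^sub>R axis k 1)) has_vector_derivative Gk h x) (at 0)"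
    using nice_dx[OF G'(1), of k] by blast
  have ev2: "eventually (\<lambda>s. s \<in> UNIV \<longrightarrow> G' h (x + s *\<^sub>R axis k 1) = iter_pd ds f h (x + s *\<^sub>R axis k 1)) (nhds 0)"
    using ev_line[OF U, of x k] hx eq by (auto elim: eventually_mono)
  have "((\<lambda>s. iter_pd ds f h (x + s *\<^sub>R axis k 1)) has_vector_derivative Gk h x) (at 0)"
    using has_vector_derivative_cong_ev[OF ev2] Gk(2) hx eq by auto
  then show "(\<lambda>s. iter_pd ds f h (x + s *\<^sub>R axis k 1)) differentiable at 0" by (rule differentiableI_vector)
qed

definition off1 :: "('n::finite) form \<Rightarrow> bool" where
  "off1 \<alpha> \<longleftrightarrow> (\<forall>h x is. length is \<noteq> 1 \<longrightarrow> \<alpha> h x is = 0)"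

lemma wedge_zero:
  assumes "\<And>k \<sigma>. k \<le> length is \<Longrightarrow> \<sigma> permutes {..<length is} \<Longrightarrow>
     \<alpha> h x (map (\<lambda>p. is ! \<sigma> p) [0..<k]) = 0 \<or> \<beta> h x (map (\<lambda>p. is ! \<sigma> p) [k..<length is]) = 0"
  shows "wedge \<alpha> \<beta> h x is = 0"
  unfolding wedge_def
  apply (intro sum.neutral ballI)
  subgoal for k \<sigma> using assms[of k \<sigma>] by auto
  done

lemma perms1: "{\<sigma>. \<sigma> permutes {..<Suc 0}} = {id}"
  by (auto simp: lessThan_Suc)

lemma perms2: "{\<sigma>. \<sigma> permutes {..<2::nat}} = {id, Transposition.transpose 0 1}"
proof -
  have "card {\<sigma>. \<sigma> permutes {..<2::nat}} = fact 2" by (rule card_permutations) auto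
  hence c: "card {\<sigma>. \<sigma> permutes {..<2::nat}} = 2" by simp
  have ne: "id \<noteq> (Transposition.transpose 0 1 :: nat \<Rightarrow> nat)"
    by (metis id_apply transpose_apply_first zero_neq_one)
  have sub: "{id, Transposition.transpose 0 1} \<subseteq> {\<sigma>. \<sigma> permutes {..<2::nat}}"
    by (auto intro!: permutes_swap_id)
  have "card {id, Transposition.transpose 0 (1::nat)} = 2" using ne by simp
  thus ?thesis using card_subset_eq[OF finite_permutations[of "{..<2::nat}"] sub] c by auto
qed

lemma wedge_0form:
  assumes "off1 \<beta>"
  shows "wedge (zero_form f) \<beta> h x is = (if length is = 1 then f h x * \<beta> h x is else 0)"
proof (cases "length is = 1")
  case True
  then obtain i where i: "is = [i]" by (cases "is") auto
  have "wedge (zero_form f) \<beta> h x is =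
    (\<Sum>k\<le>1. \<Sum>\<sigma>\<in>{id}. of_int (sign \<sigma>) / (fact k * fact (1 - k)) *
       zero_form f h x (map (\<lambda>p. is ! \<sigma> p) [0..<k]) * \<beta> h x (map (\<lambda>p. is ! \<sigma> p) [k..<1]))"
    unfolding wedge_def using True perms1 by simp
  also have "\<dots> = f h x * \<beta> h x is" using i by (simp add: zero_form_def)
  finally show ?thesis using True by simp
next
  case False
  show ?thesis using False
    apply simp
    apply (rule wedge_zero)
    using assms unfolding off1_def zero_form_def
    by (case_tac k) auto
qed

lemma wedge11:
  assumes "off1 \<alpha>" "off1 \<beta>"
  shows "wedge \<alpha> \<beta> h x is = (if length is = 2 then
     \<alpha> h x [is!0] * \<beta> h x [is!1] - \<alpha> h x [is!1] * \<beta> h x [is!0] else 0)"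
proof (cases "length is = 2")
  case True
  have "wedge \<alpha> \<beta> h x is =
    (\<Sum>k\<le>2. \<Sum>\<sigma>\<in>{id, Transposition.transpose 0 1}. of_int (sign \<sigma>) / (fact k * fact (2 - k)) *
       \<alpha> h x (map (\<lambda>p. is ! \<sigma> p) [0..<k]) * \<beta> h x (map (\<lambda>p. is ! \<sigma> p) [k..<2]))"
    unfolding wedge_def using True perms2 by simp
  also have "\<dots> = \<alpha> h x [is!0] * \<beta> h x [is!1] - \<alpha> h x [is!1] * \<beta> h x [is!0]"
  proof -
    have ne: "id \<noteq> (Transposition.transpose 0 1 :: nat \<Rightarrow> nat)"
      by (metis id_apply transpose_apply_first zero_neq_one)
    have z: "\<alpha> h x [] = 0" "\<And>u v. \<alpha> h x [u, v] = 0" "\<beta> h x [] = 0" "\<And>u v. \<beta> h x [u, v] = 0"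
      using assms unfolding off1_def by auto
    show ?thesis using ne
      by (simp add: numeral_2_eq_2 atMost_Suc upt_rec sign_swap_id z)
  qed
  finally show ?thesis using True by simp
next
  case False
  show ?thesis using False
    apply simp
    apply (rule wedge_zero)
    using assms unfolding off1_def
    by (case_tac "k = 1") auto
qed

definition dPhi :: "real^('n::finite) \<Rightarrow> real \<Rightarrow> 'n \<Rightarrow> real \<Rightarrow> real^'n \<Rightarrow> complex" where
  "dPhi l b k h x = complex_of_real (-2 * l $ k) * (complex_of_real (1/h) * (complex_of_real (l \<bullet> x + b) * Phi l b h x))"

lemma pd_Phi:
  assumes "0 < h"
  shows "pd k (\<lambda>y. c * Phi l b h y) x = c * dPhi l b k h x"
  unfolding pd_def dPhi_def
  by (rule vector_derivative_at, rule has_vector_derivative_mult_right, rule Phi_dx[OF assms])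

lemma pd_zero[simp]: "pd k (\<lambda>y. 0) x = 0"
  by (simp add: pd_def)

lemma pd_affine:
  assumes "open U" "\<forall>x\<in>U. u2 x = l \<bullet> x + b" "x \<in> U"
  shows "pd i (\<lambda>y. complex_of_real (u2 y)) x = complex_of_real (l $ i)"
proof -
  have "pd i (\<lambda>y. complex_of_real (u2 y)) x = pd i (\<lambda>y. complex_of_real (l \<bullet> y + b)) x"
    apply (rule pd_local[OF assms(1,3)]) using assms(2) by simp
  also have "\<dots> = complex_of_real (l $ i)"
  proof -
    have eq: "\<And>s. l \<bullet> (x + s *\<^sub>R axis i 1) + b = (l \<bullet> x + b) + s * l $ i"
      by (simp add: inner_add_right inner_axis algebra_simps)
    have d1: "((\<lambda>s. l \<bullet> (x + s *\<^sub>R axis i 1) + b) has_real_derivative (l $ i)) (at 0)"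
      unfolding eq by (auto intro!: derivative_eq_intros)
    show ?thesis unfolding pd_def
      by (rule vector_derivative_at, rule has_vector_derivative_of_real[OF d1])
  qed
  finally show ?thesis .
qed

lemma extd0_off1: "off1 (ext_d (zero_form F))"
  unfolding off1_def ext_d_def
proof (intro allI impI)
  fix h x and "is" :: "'a list" assume L: "length is \<noteq> 1"
  show "(\<Sum>j<length is. (- 1) ^ j * pd (is ! j) (\<lambda>y. zero_form F h y (take j is @ drop (Suc j) is)) x) = 0"
  proof (intro sum.neutral ballI)
    fix j assume j: "j \<in> {..<length is}"
    have "take j is @ drop (Suc j) is \<noteq> []" using j L by (cases "is") (auto simp: min_def)
    hence "(\<lambda>y. zero_form F h y (take j is @ drop (Suc j) is)) = (\<lambda>y. 0)" by (auto simp: zero_form_def)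
    thus "(- 1) ^ j * pd (is ! j) (\<lambda>y. zero_form F h y (take j is @ drop (Suc j) is)) x = 0" by simp
  qed
qed

lemma extd0_1: "ext_d (zero_form F) h x [i] = pd i (\<lambda>y. F h y) x"
  by (simp add: ext_d_def zero_form_def)

lemma delta_off1: "off1 (delta_m u2)"
  unfolding off1_def delta_m_def
  apply (intro allI impI)
  apply (subst wedge_0form[OF extd0_off1])
  by simp

definition repr :: "real^('n::finite) \<Rightarrow> real \<Rightarrow> (real^'n) set \<Rightarrow> real \<Rightarrow> 'n form \<Rightarrow> complex \<Rightarrow> bool" where
  "repr l b U h \<alpha> ca \<longleftrightarrow> off1 \<alpha> \<and> (\<forall>y\<in>U. \<forall>i. \<alpha> h y [i] = ca * (complex_of_real (l $ i) * Phi l b h y))"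

lemma delta_U:
  assumes "open U" "\<forall>x\<in>U. u2 x = l \<bullet> x + b" "y \<in> U"
  shows "delta_m u2 h y [i] = complex_of_real (l $ i) * Phi l b h y"
  unfolding delta_m_def
  apply (subst wedge_0form[OF extd0_off1])
  apply (simp only: extd0_1 pd_affine[OF assms] if_True list.size)
  using assms(2,3) by (simp add: Phi_def)

lemma repr_delta:
  assumes "open U" "\<forall>x\<in>U. u2 x = l \<bullet> x + b"
  shows "repr l b U h (\<lambda>h x is. C * delta_m u2 h x is) C"
  using delta_off1[of u2] delta_U[OF assms] unfolding repr_def off1_def by auto

lemma repr_deg_part:
  assumes "repr l b U h \<alpha> C"
  shows "repr l b U h (deg_part p \<alpha>) (if p = 1 then C else 0)"
  using assms unfolding repr_def off1_def deg_part_def by auto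

lemma mono_zero:
  assumes "\<alpha> h x is = 0"
  shows "mono \<alpha> m n M c h x is = 0"
  using assms by (simp add: mono_def zform_def)

lemma nabla_off1: "off1 \<beta> \<Longrightarrow> off1 (nabla v \<beta>)"
  unfolding off1_def nabla_def by simp

lemma nabla_U:
  assumes "open U" "repr l b U h \<beta> cb" "x \<in> U" "0 < h"
  shows "nabla v \<beta> h x [j] = complex_of_real (l $ j) * (cb * (\<Sum>k\<in>UNIV. complex_of_real (v h x $ k) * dPhi l b k h x))"
proof -
  have "\<And>k. pd k (\<lambda>y. \<beta> h y [j]) x = pd k (\<lambda>y. (cb * complex_of_real (l $ j)) * Phi l b h y) x"
  proof -
    fix k
    have "pd k (\<lambda>y. \<beta> h y [j]) x = pd k (\<lambda>y. cb * (complex_of_real (l $ j) * Phi l b h y)) x"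
      apply (rule pd_local[OF assms(1,3)]) using assms(2) unfolding repr_def by simp
    thus "pd k (\<lambda>y. \<beta> h y [j]) x = pd k (\<lambda>y. (cb * complex_of_real (l $ j)) * Phi l b h y) x"
      by (simp add: ac_simps)
  qed
  hence "nabla v \<beta> h x [j] = (\<Sum>k\<in>UNIV. complex_of_real (v h x $ k) * ((cb * complex_of_real (l $ j)) * dPhi l b k h x))"
    unfolding nabla_def using pd_Phi[OF assms(4), of _ "cb * complex_of_real (l $ j)" l b x] by simp
  also have "\<dots> = complex_of_real (l $ j) * (cb * (\<Sum>k\<in>UNIV. complex_of_real (v h x $ k) * dPhi l b k h x))"
    by (simp add: sum_distrib_left ac_simps)
  finally show ?thesis .
qed

lemma wedge_repr_nabla:
  assumes "open U" "repr l b U h \<alpha> ca" "repr l b U h \<beta> cb" "x \<in> U" "0 < h"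
  shows "wedge \<alpha> (nabla v \<beta>) h x is = 0"
proof -
  have o: "off1 \<alpha>" "off1 (nabla v \<beta>)" using assms(2,3) nabla_off1 unfolding repr_def by auto
  have a: "\<And>i. \<alpha> h x [i] = ca * (complex_of_real (l $ i) * Phi l b h x)" using assms(2,4) unfolding repr_def by auto
  show ?thesis unfolding wedge11[OF o] a nabla_U[OF assms(1,3,4,5)] by (simp add: algebra_simps)
qed

lemma wedge_repr:
  assumes "repr l b U h \<alpha> ca" "repr l b U h \<beta> cb" "x \<in> U"
  shows "wedge \<alpha> \<beta> h x is = 0"
proof -
  have o: "off1 \<alpha>" "off1 \<beta>" using assms(1,2) unfolding repr_def by auto
  have a: "\<And>i. \<alpha> h x [i] = ca * (complex_of_real (l $ i) * Phi l b h x)"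
    "\<And>i. \<beta> h x [i] = cb * (complex_of_real (l $ i) * Phi l b h x)" using assms unfolding repr_def by auto
  show ?thesis unfolding wedge11[OF o] a by (simp add: algebra_simps)
qed

lemma br_gen_zero:
  assumes "open U" "repr l b U h \<alpha> ca" "repr l b U h \<beta> cb" "x \<in> U" "0 < h"
  shows "br_gen g p q \<alpha> m n \<beta> m' n' M c h x is = 0"
  unfolding br_gen_def
  using mono_zero[of "wedge \<alpha> \<beta>", OF wedge_repr[OF assms(2,3,4)]]
    mono_zero[of "wedge \<alpha> (nabla (dvec g n) \<beta>)", OF wedge_repr_nabla[OF assms(1,2,3,4,5)]]
    mono_zero[of "wedge \<beta> (nabla (dvec g n') \<alpha>)", OF wedge_repr_nabla[OF assms(1,3,2,4,5)]]
  by simp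

lemma pd_delta:
  assumes "open U" "\<forall>x\<in>U. u2 x = l \<bullet> x + b" "x \<in> U" "0 < h"
  shows "pd k (\<lambda>y. C * delta_m u2 h y js) x =
    (if length js = 1 then C * complex_of_real (l $ hd js) * dPhi l b k h x else 0)"
proof (cases "length js = 1")
  case True
  then obtain i where i: "js = [i]" by (cases js) auto
  have "pd k (\<lambda>y. C * delta_m u2 h y js) x = pd k (\<lambda>y. (C * complex_of_real (l $ i)) * Phi l b h y) x"
    apply (rule pd_local[OF assms(1,3)]) using delta_U[OF assms(1,2)] i by simp
  also have "\<dots> = C * complex_of_real (l $ i) * dPhi l b k h x" by (rule pd_Phi[OF assms(4)])
  finally show ?thesis using i by simp
next
  case False
  have "(\<lambda>y. C * delta_m u2 h y js) = (\<lambda>y. 0)" using delta_off1[of u2] False unfolding off1_def by auto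
  then show ?thesis using False by simp
qed

lemma dbar_zero:
  assumes "open U" "\<forall>x\<in>U. u2 x = l \<bullet> x + b" "x \<in> U" "0 < h"
  shows "ext_d (\<lambda>h x is. C * delta_m u2 h x is) h x is = 0"
  unfolding ext_d_def pd_delta[OF assms]
proof (cases "length is = 2")
  case True
  then obtain i1 i2 where i: "is = [i1, i2]"
    by (cases "is"; cases "tl is") (auto simp: numeral_2_eq_2)
  show "(\<Sum>j<length is. (- 1) ^ j * (if length (take j is @ drop (Suc j) is) = 1 then C * complex_of_real (l $ hd (take j is @ drop (Suc j) is)) * dPhi l b (is ! j) h x else 0)) = 0"
    unfolding i by (simp add: numeral_2_eq_2 lessThan_Suc dPhi_def algebra_simps)
next
  case False
  show "(\<Sum>j<length is. (- 1) ^ j * (if length (take j is @ drop (Suc j) is) = 1 then C * complex_of_real (l $ hd (take j is @ drop (Suc j) is)) * dPhi l b (is ! j) h x else 0)) = 0"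
    apply (intro sum.neutral ballI)
    using False by (auto simp: min_def)
qed

lemma off1_alternating:
  fixes \<alpha> :: "('n::finite) form"
  shows "off1 \<alpha> \<Longrightarrow> alternating \<alpha>"
  unfolding alternating_def
proof (intro allI impI)
  fix h x and "is" :: "'n list" and \<sigma>
  assume o: "off1 \<alpha>" and p: "\<sigma> permutes {..<length is}"
  show "\<alpha> h x (map (\<lambda>p. is ! \<sigma> p) [0..<length is]) = of_int (sign \<sigma>) * \<alpha> h x is"
  proof (cases "length is = 1")
    case True
    then obtain i where i: "is = [i]" by (cases "is") auto
    have "\<sigma> = id" using p perms1 True by auto
    then show ?thesis using i by simp
  next
    case False
    then show ?thesis using o unfolding off1_def by simp
  qed
qed

definition Cf :: "int^('n::finite) \<Rightarrow> int^'n \<Rightarrow> (nat \<Rightarrow> nat \<Rightarrow> complex) \<Rightarrow> nat \<Rightarrow> int^'n \<Rightarrow> 'n \<Rightarrow> complex" where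
  "Cf m n a N M c = (if N = 0 then 0 else
     - (\<Sum>k\<in>{k. 1 \<le> k \<and> a N k \<noteq> 0}. a N k * (if M = int k *s m then of_int (n $ c) else 0)))"

lemma wall_Pi_eq: "wall_Pi u2 m n a N M c = (\<lambda>h x is. Cf m n a N M c * delta_m u2 h x is)"
  unfolding wall_Pi_def Cf_def mono_def zform_def
  by (auto simp: sum_distrib_right intro!: ext sum.cong)

theorem proposition4p4:
  fixes U :: "(real^'n) set" and g :: "real^'n \<Rightarrow> real^'n^'n"
    and m n :: "int^'n" and P :: "(real^'n) set" and \<nu> :: "real^'n"
    and a :: "nat \<Rightarrow> nat \<Rightarrow> complex" and u2 :: "real^'n \<Rightarrow> real"
  assumes "convex U" and "open U"
    and "hessian_metric U g"
    and "is_wall U m P \<nu> n a"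
    and "\<exists>l b. \<forall>x\<in>U. u2 x = l \<bullet> x + b"
    and "P = {x \<in> U. u2 x = 0}"
    and "\<forall>x\<in>half_plus U P \<nu>. u2 x > 0"
  shows "in_Ghat U 1 (wall_Pi u2 m n a) \<and> maurer_cartan U g (wall_Pi u2 m n a)"
proof -
  obtain l bb where aff: "\<forall>x\<in>U. u2 x = l \<bullet> x + bb" using assms(5) by blast
  have U: "open U" by (rule assms(2))
  have fin: "\<forall>j\<ge>1. finite {k. 1 \<le> k \<and> a j k \<noteq> 0}" using assms(4) unfolding is_wall_def by blast
  define A where "A = wall_Pi u2 m n a"
  have Aeq: "\<And>N M c. A N M c = (\<lambda>h x is. Cf m n a N M c * delta_m u2 h x is)"
    unfolding A_def by (rule wall_Pi_eq)
  have supp: "finite (Gsupp (A N))" for N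
  proof (cases "N = 0")
    case True
    have "Gsupp (A N) = {}" unfolding Gsupp_def Aeq using True by (auto simp: Cf_def zform_def)
    then show ?thesis by simp
  next
    case False
    have "Gsupp (A N) \<subseteq> (\<lambda>k. int k *s m) ` {k. 1 \<le> k \<and> a N k \<noteq> 0}"
    proof
      fix M assume "M \<in> Gsupp (A N)"
      then obtain c where c: "A N M c \<noteq> zform" unfolding Gsupp_def by blast
      show "M \<in> (\<lambda>k. int k *s m) ` {k. 1 \<le> k \<and> a N k \<noteq> 0}"
      proof (rule ccontr)
        assume nM: "M \<notin> (\<lambda>k. int k *s m) ` {k. 1 \<le> k \<and> a N k \<noteq> 0}"
        have "Cf m n a N M c = 0" unfolding Cf_def
          using nM by (auto intro!: sum.neutral)
        hence "A N M c = zform" unfolding Aeq zform_def by simp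
        thus False using c by simp
      qed
    qed
    moreover have "finite {k. 1 \<le> k \<and> a N k \<noteq> 0}" using fin False by simp
    ultimately show ?thesis by (meson finite_imageI finite_subset)
  qed
  have kform: "is_kform U 1 (A N M c)" for N M c
    unfolding is_kform_def
  proof (intro conjI allI impI)
    have o: "off1 (A N M c)" unfolding Aeq using delta_off1[of u2] unfolding off1_def by simp
    show "alternating (A N M c)" by (rule off1_alternating[OF o])
    show "\<And>h x is. length is \<noteq> 1 \<Longrightarrow> A N M c h x is = 0" using o unfolding off1_def by simp
    fix "is" :: "'n list"
    show "smooth_HU U (\<lambda>h x. A N M c h x is)"
    proof (rule smooth_from_nice[OF U])
      show "nice l bb (\<lambda>h x. (if length is = 1 then Cf m n a N M c * complex_of_real (l $ hd is) else 0) * Phi l bb h x)"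
        by (rule nice.cmul[OF nice.base])
      show "\<forall>h. \<forall>x\<in>U. A N M c h x is = (if length is = 1 then Cf m n a N M c * complex_of_real (l $ hd is) else 0) * Phi l bb h x"
      proof (intro allI ballI)
        fix h x assume x: "x \<in> U"
        show "A N M c h x is = (if length is = 1 then Cf m n a N M c * complex_of_real (l $ hd is) else 0) * Phi l bb h x"
        proof (cases "length is = 1")
          case True
          then obtain i where i: "is = [i]" by (cases "is") auto
          show ?thesis unfolding Aeq i using delta_U[OF U aff x] by simp
        next
          case False
          then show ?thesis using o unfolding off1_def by simp
        qed
      qed
    qed
  qed
  have mc: "maurer_cartan U g A"
    unfolding maurer_cartan_def
  proof (intro allI impI)
    fix N M c and h :: real and x and "is" :: "'n list"
    assume h: "0 < h" and x: "x \<in> U"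
    have d: "Ghat_dbar A N M c h x is = 0"
      unfolding Ghat_dbar_def Aeq by (rule dbar_zero[OF U aff x h])
    have r: "\<And>j M' c'. repr l bb U h (A j M' c') (Cf m n a j M' c')"
      unfolding Aeq by (rule repr_delta[OF U aff])
    have "\<And>j. Gbr g (A j) (A (N - j)) M c h x is = 0"
      unfolding Gbr_def
      by (simp add: br_gen_zero[OF U repr_deg_part[OF r] repr_deg_part[OF r] x h])
    hence b: "Ghat_br g A A N M c h x is = 0" unfolding Ghat_br_def by simp
    show "Ghat_dbar A N M c h x is + 1 / 2 * Ghat_br g A A N M c h x is = 0"
      using d b by simp
  qed
  show ?thesis
    using supp kform mc unfolding in_Ghat_def A_def by blast
qed

end
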